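(* Let $V$ be a commutative $\mathbb C$-algebra of functions of $x$ closed under $\partial_x$, $\mathbf t=(t_0=x,t_1,\dots)$, $u(\mathbf t)\in V[[t_1,t_2,\dots]]$ a solution of the KdV hierarchy, and $(\psi,\psi^* )$ a pair of wave functions of $u$. Let $$\Psi(z,\mathbf t)=\begin{pmatrix}\psi(z,\mathbf t)&\psi^*(z,\mathbf t)\\-\partial_x\psi(z,\mathbf t)&-\partial_x\psi^*(z,\mathbf t)\end{pmatrix}.$$ Then $\det\Psi(z,\mathbf t)=2z$, $b(z^2,\mathbf t)=\psi(z,\mathbf t)\psi^*(z,\mathbf t)$, and $$R(z^2,\mathbf t)=-\Psi(z,\mathbf t)\begin{pmatrix}z&0\\0&-z\end{pmatrix}\Psi(z,\mathbf t)^{-1},$$ where all products are formed with the exponential factors cancelling.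
   Context: KdV hierarchy: $L=\partial_x^2+2u$, $A_k=\frac1{(2k+1)!!}(L^{(2k+1)/2})_+$; $\partial L/\partial t_k=[A_k,L]$ for all $k$. $b(\lambda,\mathbf t)=\sum_{k\ge-1}b_k(\mathbf t)\lambda^{-k-1}$, $b_{-1}=1$, is the unique such series with coefficients in $V[[t_{>0}]]$ satisfying $bb_{xx}-\frac12b_x^2-2(\lambda-2u)b^2=-2\lambda$, and the basic matrix resolvent of $u$ is $R(\lambda,\mathbf t)=\begin{pmatrix}\frac12b_x&b\\(\lambda-2u)b-\frac12b_{xx}&-\frac12b_x\end{pmatrix}$. Wave functions: fix $\widetilde V$ with $V\subseteq\partial_x\widetilde V\subseteq\widetilde V$, $\xi=\sum_kt_kz^{2k+1}/(2k+1)!!$. A wave function is $\psi=(1+\sum_{m\ge1}\phi_m(\mathbf t)z^{-m})e^{\xi}$, $\phi_m\in\widetilde V[[t_{>0}]]$, with $L\psi=z^2\psi$, $\partial_{t_k}\psi=A_k\psi$; its dual is the unique $\psi^*=(1+\sum_{m\ge1}\phi^*_m(\mathbf t)z^{-m})e^{-\xi}$ with $L\psi^*=z^2\psi^*$, $\partial_{t_k}\psi^*=A_k\psi^*$, and with $\partial_x^i(\psi)\psi^*$ (exponentials cancelling) having zero $z^{-1}$-coefficient for every $i\ge0$; $(\psi,\psi^* )$ is then a pair of wave functions. *)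

theory Defs
  imports "HOL-Analysis.Analysis" "HOL-Computational_Algebra.Formal_Laurent_Series"
          "HOL-Library.Poly_Mapping"
begin

text \<open>A multi-index alpha :: nat =>0 nat gives the exponent of t_(k+1) at key k.
  Elements of V~[[t_1,t_2,...]] are represented as functions (nat =>0 nat) => 'v.\<close>

definition ps_mult :: "((nat \<Rightarrow>\<^sub>0 nat) \<Rightarrow> 'v::comm_ring_1) \<Rightarrow> ((nat \<Rightarrow>\<^sub>0 nat) \<Rightarrow> 'v)
                        \<Rightarrow> (nat \<Rightarrow>\<^sub>0 nat) \<Rightarrow> 'v" where
  "ps_mult f g \<alpha> = (\<Sum>p \<in> {p. fst p + snd p = \<alpha>}. f (fst p) * g (snd p))"

definition ps_const :: "'v::zero \<Rightarrow> (nat \<Rightarrow>\<^sub>0 nat) \<Rightarrow> 'v" where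
  "ps_const a \<alpha> = (if \<alpha> = 0 then a else 0)"

text \<open>partial derivative with respect to t_(k+1)\<close>
definition ps_dt :: "nat \<Rightarrow> ((nat \<Rightarrow>\<^sub>0 nat) \<Rightarrow> 'v::comm_ring_1) \<Rightarrow> (nat \<Rightarrow>\<^sub>0 nat) \<Rightarrow> 'v" where
  "ps_dt k f \<alpha> = of_nat (Poly_Mapping.lookup \<alpha> k + 1) * f (\<alpha> + Poly_Mapping.single k 1)"

definition ps_dx :: "('v \<Rightarrow> 'v) \<Rightarrow> ((nat \<Rightarrow>\<^sub>0 nat) \<Rightarrow> 'v) \<Rightarrow> (nat \<Rightarrow>\<^sub>0 nat) \<Rightarrow> 'v" where
  "ps_dx d f \<alpha> = d (f \<alpha>)"

text \<open>Laurent series with finitely many positive powers of z (resp. lambda) are represented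
  as fls in the variable X = z^(-1) (resp. lambda^(-1)); z itself is fls_X_inv.\<close>

definition fls_dmap :: "('r::zero \<Rightarrow> 'r) \<Rightarrow> 'r fls \<Rightarrow> 'r fls" where
  "fls_dmap d f = Abs_fls (\<lambda>n. d (fls_nth f n))"

text \<open>substitution lambda := z^2, i.e. X := X^2\<close>
definition fls_subst_sq :: "'r::zero fls \<Rightarrow> 'r fls" where
  "fls_subst_sq f = Abs_fls (\<lambda>n. if even n then fls_nth f (n div 2) else 0)"

text \<open>A pseudo-differential operator sum_(i<=N) a_i d^i is represented as an fls in the
  variable d^(-1): the coefficient of d^i is fls_nth P (-i).\<close>

definition pd_coeff :: "'r::zero fls \<Rightarrow> int \<Rightarrow> 'r" where
  "pd_coeff P i = fls_nth P (- i)"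

definition pd_of :: "(int \<Rightarrow> 'r::zero) \<Rightarrow> 'r fls" where
  "pd_of f = Abs_fls (\<lambda>n. f (- n))"

definition pd_top :: "'r::zero fls \<Rightarrow> int" where
  "pd_top P = - fls_subdegree P"

definition ibinom :: "int \<Rightarrow> nat \<Rightarrow> int" where
  "ibinom i l = (\<Prod>s<l. i - int s) div int (fact l)"

text \<open>composition: (a d^i)(b d^j) = sum_(l>=0) binom(i,l) a b^(l) d^(i+j-l)\<close>
definition pd_mult :: "('r::comm_ring_1 \<Rightarrow> 'r) \<Rightarrow> 'r fls \<Rightarrow> 'r fls \<Rightarrow> 'r fls" where
  "pd_mult d P Q = pd_of (\<lambda>m.
     \<Sum>i \<in> {m - pd_top Q .. pd_top P}. \<Sum>l \<in> {0 .. nat (pd_top P + pd_top Q - m)}.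
        of_int (ibinom i l) * pd_coeff P i * (d ^^ l) (pd_coeff Q (m - i + int l)))"

definition pd_one :: "'r::{zero,one} fls" where
  "pd_one = pd_of (\<lambda>i. if i = 0 then 1 else 0)"

definition pd_pow :: "('r::comm_ring_1 \<Rightarrow> 'r) \<Rightarrow> 'r fls \<Rightarrow> nat \<Rightarrow> 'r fls" where
  "pd_pow d P n = (pd_mult d P ^^ n) pd_one"

definition pd_plus :: "'r::zero fls \<Rightarrow> 'r fls" where
  "pd_plus P = pd_of (\<lambda>i. if i \<ge> 0 then pd_coeff P i else 0)"

definition pd_smult :: "'r::comm_ring_1 \<Rightarrow> 'r fls \<Rightarrow> 'r fls" where
  "pd_smult c P = pd_of (\<lambda>i. c * pd_coeff P i)"

definition kdvL :: "'r::comm_ring_1 \<Rightarrow> 'r fls" where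
  "kdvL u = pd_of (\<lambda>i. if i = 2 then 1 else if i = 0 then 2 * u else 0)"

definition kdv_sqrtL :: "('r::comm_ring_1 \<Rightarrow> 'r) \<Rightarrow> 'r \<Rightarrow> 'r fls" where
  "kdv_sqrtL d u = (THE Q. pd_coeff Q 1 = 1 \<and> (\<forall>i>1. pd_coeff Q i = 0) \<and> pd_mult d Q Q = kdvL u)"

definition dfact_odd :: "nat \<Rightarrow> nat" where
  "dfact_odd k = (\<Prod>i\<in>{0..k}. 2 * i + 1)"

text \<open>A_k = (L^((2k+1)/2))_+ / (2k+1)!!; kappa embeds the complex scalars\<close>
definition kdvA :: "('r::comm_ring_1 \<Rightarrow> 'r) \<Rightarrow> (complex \<Rightarrow> 'r) \<Rightarrow> 'r \<Rightarrow> nat \<Rightarrow> 'r fls" where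
  "kdvA d \<kappa> u k = pd_smult (\<kappa> (1 / of_nat (dfact_odd k)))
                      (pd_plus (pd_pow d (kdv_sqrtL d u) (2 * k + 1)))"

text \<open>u solves the KdV hierarchy: dL/dt_k = [A_k, L] for all k (D 0 = d/dx, D k = d/dt_k)\<close>
definition kdv_solution :: "(nat \<Rightarrow> 'r::comm_ring_1 \<Rightarrow> 'r) \<Rightarrow> (complex \<Rightarrow> 'r) \<Rightarrow> 'r \<Rightarrow> bool" where
  "kdv_solution D \<kappa> u \<longleftrightarrow> (\<forall>k. fls_dmap (D k) (kdvL u) =
      pd_mult (D 0) (kdvA (D 0) \<kappa> u k) (kdvL u) - pd_mult (D 0) (kdvL u) (kdvA (D 0) \<kappa> u k))"

text \<open>The series b(lambda) = sum_(k>=-1) b_k lambda^(-k-1), as fls in lambda^(-1)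
  (fls_nth b n = b_(n-1)), with coefficients in the set S (= V[[t_>0]]).\<close>
definition kdv_b :: "('r::comm_ring_1 \<Rightarrow> 'r) \<Rightarrow> (complex \<Rightarrow> 'r) \<Rightarrow> 'r set \<Rightarrow> 'r \<Rightarrow> 'r fls" where
  "kdv_b d \<kappa> S u = (THE b. (\<forall>n. fls_nth b n \<in> S) \<and> (\<forall>n<0. fls_nth b n = 0) \<and> fls_nth b 0 = 1 \<and>
      b * fls_dmap d (fls_dmap d b) - fls_const (\<kappa> (1/2)) * (fls_dmap d b)^2
        - 2 * (fls_X_inv - 2 * fls_const u) * b^2 = - 2 * fls_X_inv)"

definition mat2 :: "'a \<Rightarrow> 'a \<Rightarrow> 'a \<Rightarrow> 'a \<Rightarrow> 'a^2^2" where
  "mat2 a b c e = (\<chi> i j. if i = 1 then (if j = 1 then a else b) else (if j = 1 then c else e))"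

definition kdv_R :: "('r::comm_ring_1 \<Rightarrow> 'r) \<Rightarrow> (complex \<Rightarrow> 'r) \<Rightarrow> 'r set \<Rightarrow> 'r \<Rightarrow> 'r fls^2^2" where
  "kdv_R d \<kappa> S u = (let b = kdv_b d \<kappa> S u; h = fls_const (\<kappa> (1/2)) in
     mat2 (h * fls_dmap d b) b
          ((fls_X_inv - 2 * fls_const u) * b - h * fls_dmap d (fls_dmap d b)) (- h * fls_dmap d b))"

text \<open>For psi = w e^(c-part), with c = z for psi and c = -z for psi*, the derivative d/dx
  of psi corresponds to w |-> d w + c w.\<close>
definition shift_op :: "('r::comm_ring_1 \<Rightarrow> 'r) \<Rightarrow> 'r fls \<Rightarrow> 'r fls \<Rightarrow> 'r fls" where
  "shift_op d c f = fls_dmap d f + c * f"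

text \<open>application of a differential operator sum_(i>=0) a_i d^i, conjugated by the exponential\<close>
definition conj_apply :: "('r::comm_ring_1 \<Rightarrow> 'r) \<Rightarrow> 'r fls \<Rightarrow> 'r fls \<Rightarrow> 'r fls \<Rightarrow> 'r fls" where
  "conj_apply d c A w = (\<Sum>i\<in>{0..nat (pd_top A)}. fls_const (pd_coeff A (int i)) * (shift_op d c ^^ i) w)"

text \<open>w e^(+-xi) with xi = sum_k t_k z^(2k+1)/(2k+1)!! satisfies L psi = z^2 psi and
  d psi/d t_k = A_k psi; c = fls_X_inv (= z) for e^xi, c = - fls_X_inv for e^(-xi).\<close>
definition wave_eqs :: "(nat \<Rightarrow> 'r::comm_ring_1 \<Rightarrow> 'r) \<Rightarrow> (complex \<Rightarrow> 'r) \<Rightarrow> 'r \<Rightarrow> 'r fls \<Rightarrow> 'r fls \<Rightarrow> bool" where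
  "wave_eqs D \<kappa> u c w \<longleftrightarrow>
     (\<forall>n<0. fls_nth w n = 0) \<and> fls_nth w 0 = 1 \<and>
     conj_apply (D 0) c (kdvL u) w = fls_X_inv ^ 2 * w \<and>
     (\<forall>k. fls_dmap (D k) w + c ^ (2 * k + 1) * fls_const (\<kappa> (1 / of_nat (dfact_odd k))) * w
            = conj_apply (D 0) c (kdvA (D 0) \<kappa> u k) w)"

definition is_wave_function :: "(nat \<Rightarrow> 'r::comm_ring_1 \<Rightarrow> 'r) \<Rightarrow> (complex \<Rightarrow> 'r) \<Rightarrow> 'r \<Rightarrow> 'r fls \<Rightarrow> bool" where
  "is_wave_function D \<kappa> u w \<longleftrightarrow> wave_eqs D \<kappa> u fls_X_inv w"

definition is_wave_pair :: "(nat \<Rightarrow> 'r::comm_ring_1 \<Rightarrow> 'r) \<Rightarrow> (complex \<Rightarrow> 'r) \<Rightarrow> 'r \<Rightarrow> 'r fls \<Rightarrow> 'r fls \<Rightarrow> bool" where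
  "is_wave_pair D \<kappa> u w ws \<longleftrightarrow> is_wave_function D \<kappa> u w \<and> wave_eqs D \<kappa> u (- fls_X_inv) ws \<and>
     (\<forall>i. fls_nth ((shift_op (D 0) fls_X_inv ^^ i) w * ws) 1 = 0)"

text \<open>Psi with the exponential factors stripped (Psi = PsiHat * diag(e^xi, e^-xi))\<close>
definition wave_matrix :: "('r::comm_ring_1 \<Rightarrow> 'r) \<Rightarrow> 'r fls \<Rightarrow> 'r fls \<Rightarrow> 'r fls^2^2" where
  "wave_matrix d w ws = mat2 w ws (- shift_op d fls_X_inv w) (- shift_op d (- fls_X_inv) ws)"

end

theory Submission
  imports Defs
begin

lemma times_nth_bound:
  fixes f g :: "'a::comm_ring_1 fls"
  assumes "\<And>i. i < a \<Longrightarrow> fls_nth f i = 0" "\<And>i. i < b \<Longrightarrow> fls_nth g i = 0"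
  shows "fls_nth (f * g) n = (\<Sum>i=a..n-b. fls_nth f i * fls_nth g (n - i))"
proof (cases "f = 0 \<or> g = 0")
  case True thus ?thesis by auto
next
  case False
  hence fa: "a \<le> fls_subdegree f" and gb: "b \<le> fls_subdegree g"
    using fls_subdegree_geI assms by blast+
  have "fls_nth (f * g) n = (\<Sum>i=fls_subdegree f..n - fls_subdegree g. fls_nth f i * fls_nth g (n - i))"
    by (rule fls_times_nth(2))
  also have "\<dots> = (\<Sum>i=a..n-b. fls_nth f i * fls_nth g (n - i))"
  proof (rule sum.mono_neutral_left)
    show "finite {a..n - b}" by simp
    show "{fls_subdegree f..n - fls_subdegree g} \<subseteq> {a..n - b}" using fa gb by auto
    show "\<forall>i\<in>{a..n - b} - {fls_subdegree f..n - fls_subdegree g}. fls_nth f i * fls_nth g (n - i) = 0"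
    proof
      fix i assume "i \<in> {a..n - b} - {fls_subdegree f..n - fls_subdegree g}"
      hence "i < fls_subdegree f \<or> n - i < fls_subdegree g" by auto
      thus "fls_nth f i * fls_nth g (n - i) = 0" by auto
    qed
  qed
  finally show ?thesis .
qed

lemma ps_times_nth:
  fixes f g :: "'a::comm_ring_1 fls"
  assumes "\<And>i. i < 0 \<Longrightarrow> fls_nth f i = 0" "\<And>i. i < 0 \<Longrightarrow> fls_nth g i = 0"
  shows "fls_nth (f * g) n = (\<Sum>i=0..n. fls_nth f i * fls_nth g (n - i))"
  using times_nth_bound[of 0 f 0 g n] assms by simp

lemma ps_times_ps:
  fixes f g :: "'a::comm_ring_1 fls"
  assumes "\<And>i. i < 0 \<Longrightarrow> fls_nth f i = 0" "\<And>i. i < 0 \<Longrightarrow> fls_nth g i = 0" "n < 0"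
  shows "fls_nth (f * g) n = 0"
  using ps_times_nth[of f g n] assms by simp

locale deriv =
  fixes \<delta> :: "'r::comm_ring_1 \<Rightarrow> 'r"
  assumes dadd: "\<And>a b. \<delta> (a + b) = \<delta> a + \<delta> b"
    and dmult: "\<And>a b. \<delta> (a * b) = a * \<delta> b + \<delta> a * b"
begin

lemma d0[simp]: "\<delta> 0 = 0"
  using dadd[of 0 0] by simp

lemma d1[simp]: "\<delta> 1 = 0"
  using dmult[of 1 1] by simp

lemma dneg: "\<delta> (- a) = - \<delta> a"
  using dadd[of a "-a"] by (simp add: eq_neg_iff_add_eq_0 add.commute)

lemma ddiff: "\<delta> (a - b) = \<delta> a - \<delta> b"
  using dadd[of a "-b"] dneg[of b] by simp

lemma dsum: "\<delta> (sum f A) = (\<Sum>i\<in>A. \<delta> (f i))"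
  by (induction A rule: infinite_finite_induct) (auto simp: dadd)

lemma dmap_nth[simp]: "fls_nth (fls_dmap \<delta> f) n = \<delta> (fls_nth f n)"
proof -
  have "\<forall>\<^sub>\<infinity>n. \<delta> (fls_nth f (- int n)) = 0"
    using MOST_fls_neg_nth_eq_0[of f] by (rule eventually_mono) simp
  thus ?thesis unfolding fls_dmap_def by simp
qed

lemma dmap_add[simp]: "fls_dmap \<delta> (f + g) = fls_dmap \<delta> f + fls_dmap \<delta> g"
  by (simp add: fls_eq_iff dadd)

lemma dmap_uminus[simp]: "fls_dmap \<delta> (- f) = - fls_dmap \<delta> f"
  by (simp add: fls_eq_iff dneg)

lemma dmap_diff[simp]: "fls_dmap \<delta> (f - g) = fls_dmap \<delta> f - fls_dmap \<delta> g"
  by (simp add: fls_eq_iff ddiff)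

lemma dmap_zero[simp]: "fls_dmap \<delta> 0 = 0"
  by (simp add: fls_eq_iff)

lemma dmap_const[simp]: "fls_dmap \<delta> (fls_const c) = fls_const (\<delta> c)"
  by (simp add: fls_eq_iff)

lemma dmap_X_inv[simp]: "fls_dmap \<delta> fls_X_inv = 0"
  by (simp add: fls_eq_iff)

lemma dmap_mult: "fls_dmap \<delta> (f * g) = f * fls_dmap \<delta> g + fls_dmap \<delta> f * g"
proof (rule fls_eqI)
  fix n
  define a where "a = fls_subdegree f"
  define b where "b = fls_subdegree g"
  have fa: "\<And>i. i < a \<Longrightarrow> fls_nth f i = 0" and gb: "\<And>i. i < b \<Longrightarrow> fls_nth g i = 0"
    unfolding a_def b_def by auto
  have dfa: "\<And>i. i < a \<Longrightarrow> fls_nth (fls_dmap \<delta> f) i = 0" and dgb: "\<And>i. i < b \<Longrightarrow> fls_nth (fls_dmap \<delta> g) i = 0"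
    using fa gb by auto
  have "fls_nth (fls_dmap \<delta> (f * g)) n = \<delta> (\<Sum>i=a..n-b. fls_nth f i * fls_nth g (n - i))"
    using times_nth_bound[OF fa gb] by simp
  also have "\<dots> = (\<Sum>i=a..n-b. fls_nth f i * fls_nth (fls_dmap \<delta> g) (n - i)) + (\<Sum>i=a..n-b. fls_nth (fls_dmap \<delta> f) i * fls_nth g (n - i))"
    by (simp add: dsum dmult sum.distrib)
  also have "\<dots> = fls_nth (f * fls_dmap \<delta> g + fls_dmap \<delta> f * g) n"
    using times_nth_bound[OF fa dgb] times_nth_bound[OF dfa gb] by simp
  finally show "fls_nth (fls_dmap \<delta> (f * g)) n = fls_nth (f * fls_dmap \<delta> g + fls_dmap \<delta> f * g) n" .
qed

lemma dmap_X_inv_mult[simp]: "fls_dmap \<delta> (fls_X_inv * f) = fls_X_inv * fls_dmap \<delta> f"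
  by (simp add: dmap_mult)

lemma dmap_const_mult: "fls_dmap \<delta> (fls_const c * f) = fls_const c * fls_dmap \<delta> f + fls_const (\<delta> c) * f"
  by (simp add: dmap_mult)

end

definition evn :: "'a::zero fls \<Rightarrow> bool" where
  "evn f \<longleftrightarrow> (\<forall>n. odd n \<longrightarrow> fls_nth f n = 0)"

lemma evn_add: "evn f \<Longrightarrow> evn g \<Longrightarrow> evn (f + g)" by (simp add: evn_def)
lemma evn_diff: "evn f \<Longrightarrow> evn (g::'a::comm_ring_1 fls) \<Longrightarrow> evn (f - g)" by (simp add: evn_def)
lemma evn_uminus: "evn (f::'a::comm_ring_1 fls) \<Longrightarrow> evn (- f)" by (simp add: evn_def)
lemma evn_const_mult: "evn (f::'a::comm_ring_1 fls) \<Longrightarrow> evn (fls_const c * f)" by (simp add: evn_def)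
lemma evn_numeral_mult: "evn (f::'a::comm_ring_1 fls) \<Longrightarrow> evn (numeral k * f)" by (simp add: evn_def)
lemma evn_mult:
  fixes f g :: "'a::comm_ring_1 fls"
  assumes "evn f" "evn g" shows "evn (f * g)"
  unfolding evn_def
proof (intro allI impI)
  fix n :: int assume n: "odd n"
  have "fls_nth (f * g) n = (\<Sum>i=fls_subdegree f..n - fls_subdegree g. fls_nth f i * fls_nth g (n - i))"
    by (rule fls_times_nth(2))
  also have "\<dots> = 0"
  proof (rule sum.neutral, rule ballI)
    fix i assume "i \<in> {fls_subdegree f..n - fls_subdegree g}"
    have "odd i \<or> odd (n - i)" using n by auto
    thus "fls_nth f i * fls_nth g (n - i) = 0"
    proof
      assume "odd i" thus ?thesis using assms(1) by (simp add: evn_def)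
    next
      assume "odd (n - i)" thus ?thesis using assms(2) by (simp add: evn_def)
    qed
  qed
  finally show "fls_nth (f * g) n = 0" .
qed
lemma evn_X_inv2: "evn ((fls_X_inv::'a::comm_ring_1 fls)^2)"
  by (simp add: evn_def)

lemma X_inv_mult_nth: "fls_nth (fls_X_inv * (f::'a::comm_ring_1 fls)) n = fls_nth f (n + 1)"
  by (subst fls_X_inv_times_conv_shift(1)) (rule fls_shift_nth)

lemma X_inv_pow_mult_nth: "fls_nth (fls_X_inv ^ k * (f::'a::comm_ring_1 fls)) n = fls_nth f (n + int k)"
  by (simp add: fls_X_inv_power_times_conv_shift)

locale wavectx = deriv \<delta> for \<delta> :: "'r::comm_ring_1 \<Rightarrow> 'r" +
  fixes u k2 :: 'r and w ws :: "'r fls"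
  assumes k2: "2 * k2 = 1"
    and w_ps: "\<And>n. n < 0 \<Longrightarrow> fls_nth w n = 0" and w0: "fls_nth w 0 = 1"
    and ws_ps: "\<And>n. n < 0 \<Longrightarrow> fls_nth ws n = 0" and ws0: "fls_nth ws 0 = 1"
    and Lw: "shift_op \<delta> fls_X_inv (shift_op \<delta> fls_X_inv w) + fls_const (2 * u) * w = fls_X_inv ^ 2 * w"
    and Lws: "shift_op \<delta> (- fls_X_inv) (shift_op \<delta> (- fls_X_inv) ws) + fls_const (2 * u) * ws = fls_X_inv ^ 2 * ws"
    and pair: "\<And>i. fls_nth ((shift_op \<delta> fls_X_inv ^^ i) w * ws) 1 = 0"
begin

abbreviation "z \<equiv> (fls_X_inv :: 'r fls)"
abbreviation "dm \<equiv> fls_dmap \<delta>"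
abbreviation "sh \<equiv> shift_op \<delta> z"

lemma sh_add: "sh (f + g) = sh f + sh g"
  by (simp add: shift_op_def algebra_simps)
lemma sh_zero: "sh 0 = 0"
  by (simp add: shift_op_def)
lemma sh_const: "sh (fls_const a * f) = fls_const (\<delta> a) * f + fls_const a * sh f"
  unfolding shift_op_def dmap_mult by (simp add: algebra_simps)
lemma sh_pow_add: "(sh ^^ j) (f + g) = (sh ^^ j) f + (sh ^^ j) g"
  by (induction j) (auto simp: sh_add)
lemma dmz2: "dm (z^2) = 0"
  by (simp add: power2_eq_square dmap_mult)
lemma dm_z2: "dm (z^2 * f) = z^2 * dm f"
proof -
  have "dm (z^2 * f) = z^2 * dm f + dm (z^2) * f" by (rule dmap_mult)
  also have "\<dots> = z^2 * dm f" by (simp only: dmz2 mult_zero_left add_0_right)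
  finally show ?thesis .
qed
lemma sh_z2: "sh (z^2 * f) = z^2 * sh f"
  unfolding shift_op_def dm_z2 by (simp add: algebra_simps)
lemma sh_pow_z2: "(sh ^^ j) (z^2 * f) = z^2 * (sh ^^ j) f"
  by (induction j) (auto simp: sh_z2)

inductive_set combs :: "'r fls set" where
  c_pow: "(sh ^^ j) w \<in> combs"
| c_zero: "0 \<in> combs"
| c_add: "F \<in> combs \<Longrightarrow> G \<in> combs \<Longrightarrow> F + G \<in> combs"
| c_const: "F \<in> combs \<Longrightarrow> fls_const a * F \<in> combs"

lemma combs_sh: "F \<in> combs \<Longrightarrow> sh F \<in> combs"
proof (induction rule: combs.induct)
  case (c_pow j)
  have "sh ((sh ^^ j) w) = (sh ^^ Suc j) w" by simp
  thus ?case by (metis combs.c_pow)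
next
  case c_zero thus ?case by (simp add: sh_zero combs.c_zero)
next
  case (c_add F G) thus ?case by (simp add: sh_add combs.c_add)
next
  case (c_const F a) thus ?case by (simp add: sh_const combs.c_add combs.c_const)
qed

lemma combs_sh_pow: "F \<in> combs \<Longrightarrow> (sh ^^ j) F \<in> combs"
  by (induction j) (auto simp: combs_sh)

lemma combs_z2: "F \<in> combs \<Longrightarrow> z^2 * F \<in> combs"
proof (induction rule: combs.induct)
  case (c_pow j)
  have "z^2 * (sh ^^ j) w = (sh ^^ j) (z^2 * w)" by (simp add: sh_pow_z2)
  also have "\<dots> = (sh ^^ j) (sh (sh w)) + (sh ^^ j) (fls_const (2 * u) * w)"
    by (simp only: Lw[symmetric] sh_pow_add)
  also have "(sh ^^ j) (sh (sh w)) = (sh ^^ (j + 2)) w"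
    by (induction j) (simp_all add: numeral_2_eq_2)
  finally have eq: "z^2 * (sh ^^ j) w = (sh ^^ (j + 2)) w + (sh ^^ j) (fls_const (2 * u) * w)" .
  have w_in: "w \<in> combs" using combs.c_pow[of 0] by simp
  have "(sh ^^ (j + 2)) w \<in> combs" by (rule combs.c_pow)
  moreover have "(sh ^^ j) (fls_const (2 * u) * w) \<in> combs"
    by (rule combs_sh_pow[OF combs.c_const[OF w_in]])
  ultimately show ?case unfolding eq by (rule combs.c_add)
next
  case c_zero thus ?case by (simp add: combs.c_zero)
next
  case (c_add F G) thus ?case by (simp add: distrib_left combs.c_add)
next
  case (c_const F a) 
  have e: "z^2 * (fls_const a * F) = fls_const a * (z^2 * F)" by (rule mult.left_commute)
  show ?case unfolding e by (rule combs.c_const[OF c_const.IH])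
qed

lemma combs_res0: "F \<in> combs \<Longrightarrow> fls_nth (F * ws) 1 = 0"
  by (induction rule: combs.induct) (auto simp: pair distrib_right mult.assoc)

lemma combs_res: "F \<in> combs \<Longrightarrow> fls_nth (F * ws) (1 + 2 * int m) = 0"
proof (induction m arbitrary: F)
  case 0 thus ?case using combs_res0 by simp
next
  case (Suc m)
  have "fls_nth (F * ws) (1 + 2 * int (Suc m)) = fls_nth (z^2 * F * ws) (1 + 2 * int m)"
    using X_inv_pow_mult_nth[of 2 "F * ws" "1 + 2 * int m"] by (simp add: mult.assoc algebra_simps)
  also have "\<dots> = 0" using Suc combs_z2 by blast
  finally show ?case .
qed

lemma combs_odd: assumes "F \<in> combs" "odd n" "n > 0" shows "fls_nth (F * ws) n = 0"
proof -
  obtain k where k: "n = 2 * k + 1" using assms(2) by (auto elim: oddE)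
  moreover have "k \<ge> 0" using assms(3) k by simp
  ultimately have "n = 1 + 2 * int (nat k)" by simp
  thus ?thesis using combs_res[OF assms(1), of "nat k"] by simp
qed

end

lemma evn_const: "evn (fls_const (c::'a::comm_ring_1))"
  by (auto simp: evn_def)

lemma evn_numeral: "evn (numeral k :: 'a::comm_ring_1 fls)"
  unfolding evn_def
proof (intro allI impI)
  fix n :: int assume "odd n" hence "n \<noteq> 0" by auto
  thus "fls_nth (numeral k :: 'a fls) n = 0" by simp
qed

lemma evn_power2: "evn (g::'a::comm_ring_1 fls) \<Longrightarrow> evn (g^2)"
  by (simp add: power2_eq_square evn_mult)

lemma ring1:
  fixes w ws P Q z cu K :: "'a::comm_ring_1"
  shows "w*ws*(2*z^2*(w*ws) - 4*cu*(w*ws) + 2*P*Q) - K*(P*ws + w*Q)^2 - 2*(z^2 - 2*cu)*(w*ws)^2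
    = - K*(ws*P - w*Q)^2 + 2*(P*ws)*(w*Q)*(1 - 2*K)"
  by (simp add: algebra_simps power2_eq_square)

lemma ring2:
  fixes z E :: "'a::comm_ring_1"
  shows "4 * z * E = (2 * z + E)^2 - 4 * z^2 - E^2"
  by (simp add: algebra_simps power2_eq_square)

lemma ring3:
  fixes z K :: "'a::comm_ring_1"
  shows "- K * (2 * z)^2 = - (2 * K) * (2 * z^2)"
  by (simp add: algebra_simps power2_eq_square)

lemma ring4:
  fixes x K :: "'a::comm_ring_1"
  shows "2 * (- K * x) = - ((2 * K) * x)"
  by (simp add: algebra_simps)

context wavectx begin

definition "P = sh w"
definition "Q = shift_op \<delta> (- z) ws"
definition "f = w * ws"
definition "A = P * ws"
definition "B = w * Q"
definition "W = ws * P - w * Q"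
definition "K = (fls_const k2 :: 'r fls)"

lemma K2: "2 * K = 1"
proof -
  have "2 * K = fls_const 2 * fls_const k2" by (simp add: K_def)
  also have "\<dots> = fls_const (2 * k2)" by (rule fls_const_mult_const)
  also have "\<dots> = 1" using k2 by simp
  finally show ?thesis .
qed

lemma k2sq: "k2 * k2 * 4 = 1"
proof -
  have "k2 * k2 * 4 = (2 * k2) * (2 * k2)" by (simp add: algebra_simps)
  thus ?thesis using k2 by simp
qed

lemma dw_ps: "n < 0 \<Longrightarrow> fls_nth (dm w) n = 0" using w_ps by simp

lemma f_ps: "n < 0 \<Longrightarrow> fls_nth f n = 0"
  unfolding f_def by (rule ps_times_ps[OF w_ps ws_ps])

lemma f0: "fls_nth f 0 = 1"
  unfolding f_def using ps_times_nth[OF w_ps ws_ps, of 0] w0 ws0 by simp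

lemma w_combs: "w \<in> combs" using combs.c_pow[of 0] by simp
lemma P_combs: "P \<in> combs" using combs.c_pow[of 1] by (simp add: P_def)

lemma f_odd: "odd n \<Longrightarrow> fls_nth f n = 0"
proof (cases "n > 0")
  case True
  assume "odd n" thus ?thesis using combs_odd[OF w_combs _ True] by (simp add: f_def)
next
  case False
  assume "odd n" hence "n \<noteq> 0" by auto
  thus ?thesis using False f_ps by simp
qed

lemma A_odd: "odd n \<Longrightarrow> n > 0 \<Longrightarrow> fls_nth A n = 0"
  using combs_odd[OF P_combs] by (simp add: A_def)

lemma dm_w: "dm w = P - z * w" by (simp add: P_def shift_op_def)
lemma dm_ws: "dm ws = Q + z * ws" by (simp add: Q_def shift_op_def)

lemma dm_f: "dm f = A + B"
  unfolding f_def dmap_mult dm_w dm_ws A_def B_def by (simp add: algebra_simps)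

lemma dm_P: "dm P = z^2 * w - fls_const (2 * u) * w - z * P"
  using Lw unfolding P_def[symmetric] by (simp add: shift_op_def algebra_simps)

lemma dm_Q: "dm Q = z^2 * ws - fls_const (2 * u) * ws + z * Q"
  using Lws unfolding Q_def[symmetric] by (simp add: shift_op_def algebra_simps)

lemma cu: "fls_const (2 * u) = 2 * fls_const u"
proof -
  have "fls_const (2 * u) = fls_const 2 * fls_const u" by (rule fls_const_mult_const[symmetric])
  thus ?thesis by simp
qed

lemma ddf: "dm (dm f) = 2 * z^2 * f - 4 * fls_const u * f + 2 * P * Q"
proof -
  have "dm (dm f) = dm P * ws + P * dm ws + (dm w * Q + w * dm Q)"
    unfolding dm_f A_def B_def dmap_add dmap_mult by (simp add: algebra_simps)
  also have "\<dots> = 2 * z^2 * f - 4 * fls_const u * f + 2 * P * Q"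
    unfolding dm_P dm_Q dm_w dm_ws cu f_def by (simp add: algebra_simps power2_eq_square)
  finally show ?thesis .
qed

lemma W_alt: "W = 2 * A - dm f"
  unfolding W_def dm_f A_def B_def by (simp add: algebra_simps)

lemma A_alt: "A = dm w * ws + z * f"
  unfolding A_def f_def dm_w by (simp add: algebra_simps)

lemma A_low: "n < -1 \<Longrightarrow> fls_nth A n = 0"
  unfolding A_alt using ps_times_ps[OF dw_ps ws_ps, of n] f_ps[of "n+1"]
  by (simp add: X_inv_mult_nth)

lemma A_m1: "fls_nth A (-1) = 1"
  unfolding A_alt using ps_times_ps[OF dw_ps ws_ps, of "-1"] f0
  by (simp add: X_inv_mult_nth)

definition "E = W - 2 * z"

lemma E_ps: "n < 0 \<Longrightarrow> fls_nth E n = 0"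
proof -
  assume n: "n < 0"
  show ?thesis
  proof (cases "n = -1")
    case True thus ?thesis unfolding E_def W_alt using A_m1 f_ps[of "-1"] by simp
  next
    case False
    hence "n < -1" using n by simp
    thus ?thesis unfolding E_def W_alt using A_low f_ps[of n] n by simp
  qed
qed

lemma E_odd: "evn E"
  unfolding evn_def
proof (intro allI impI)
  fix n :: int assume n: "odd n"
  show "fls_nth E n = 0"
  proof (cases "n < 0")
    case True thus ?thesis by (rule E_ps)
  next
    case False
    hence "n > 0" using n by (cases "n = 0") auto
    thus ?thesis unfolding E_def W_alt using A_odd[OF n] f_odd[OF n] by simp
  qed
qed

lemma f_evn: "evn f" unfolding evn_def using f_odd by blast

lemma dm_evn: "evn g \<Longrightarrow> evn (dm g)" by (simp add: evn_def)

lemma riccati0: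
  "f * dm (dm f) - K * (dm f)^2 - 2 * (z^2 - 2 * fls_const u) * f^2
    = - K * W^2 + 2 * A * B * (1 - 2 * K)"
  unfolding ddf unfolding dm_f unfolding W_def A_def B_def f_def by (rule ring1)

lemma riccatiW: "f * dm (dm f) - K * (dm f)^2 - 2 * (z^2 - 2 * fls_const u) * f^2 = - K * W^2"
  unfolding riccati0 K2 by simp

lemma W2_evn: "evn (W^2)"
proof -
  have e1: "evn (f * dm (dm f))" by (intro evn_mult f_evn dm_evn)
  have e2: "evn (K * (dm f)^2)" unfolding K_def by (intro evn_const_mult evn_power2 dm_evn f_evn)
  have e3: "evn (2 * (z^2 - 2 * fls_const u) * f^2)"
    by (rule evn_mult, rule evn_numeral_mult, rule evn_diff, rule evn_X_inv2, rule evn_numeral_mult,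
        rule evn_const, rule evn_power2, rule f_evn)
  have "evn (f * dm (dm f) - K * (dm f)^2 - 2 * (z^2 - 2 * fls_const u) * f^2)"
    by (rule evn_diff[OF evn_diff[OF e1 e2] e3])
  hence "evn (- K * W^2)" unfolding riccatiW .
  hence "evn (2 * (- K * W^2))" by (rule evn_numeral_mult)
  moreover have "2 * (- K * W^2) = - ((2 * K) * W^2)" by (rule ring4)
  ultimately have "evn (- (W^2))" unfolding K2 by simp
  hence "evn (- (- (W^2)))" by (rule evn_uminus)
  thus ?thesis by simp
qed

lemma W_eq: "W = 2 * z"
proof -
  have WE: "W = 2 * z + E" by (simp add: E_def)
  have eq: "4 * z * E = W^2 - 4 * z^2 - E^2" unfolding WE by (rule ring2)
  have "evn (W^2 - 4 * z^2 - E^2)"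
    by (rule evn_diff, rule evn_diff, rule W2_evn, rule evn_numeral_mult, rule evn_X_inv2,
        rule evn_power2, rule E_odd)
  hence ev: "evn (4 * z * E)" unfolding eq .
  have "E = 0"
  proof (rule fls_eqI)
    fix m :: int
    show "fls_nth E m = fls_nth 0 m"
    proof (cases "odd m")
      case True thus ?thesis using E_odd by (simp add: evn_def)
    next
      case False
      hence "odd (m - 1)" by simp
      hence "fls_nth (4 * z * E) (m - 1) = 0" using ev by (simp add: evn_def)
      moreover have "fls_nth (4 * z * E) (m - 1) = 4 * fls_nth E m"
        by (simp only: mult.assoc fls_mult_of_numeral_nth X_inv_mult_nth diff_add_cancel)
      ultimately have x: "4 * fls_nth E m = 0" by simp
      have "fls_nth E m = (k2 * k2 * 4) * fls_nth E m" using k2sq by simp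
      also have "\<dots> = k2 * k2 * (4 * fls_nth E m)" by (simp only: mult.assoc)
      also have "\<dots> = 0" using x by simp
      finally show ?thesis by simp
    qed
  qed
  thus ?thesis using WE by simp
qed

lemma riccati: "f * dm (dm f) - K * (dm f)^2 - 2 * (z^2 - 2 * fls_const u) * f^2 = - 2 * z^2"
proof -
  have "- K * W^2 = - (2 * K) * (2 * z^2)" unfolding W_eq by (rule ring3)
  thus ?thesis unfolding riccatiW K2 by simp
qed

end

lemma sq_nth: "fls_nth (fls_subst_sq f) n = (if even n then fls_nth f (n div 2) else 0)"
proof -
  obtain M where M: "\<And>m. m > M \<Longrightarrow> fls_nth f (- int m) = 0"
    using MOST_fls_neg_nth_eq_0[of f] unfolding MOST_nat by blast
  have "\<forall>\<^sub>\<infinity>n. (if even (- int n) then fls_nth f (- int n div 2) else 0) = 0"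
    unfolding MOST_nat
  proof (intro exI allI impI)
    fix n assume n: "n > 2 * M"
    show "(if even (- int n) then fls_nth f (- int n div 2) else 0) = 0"
    proof (cases "even n")
      case True
      then obtain k where k: "n = 2 * k" by blast
      hence "- int n div 2 = - int k" by simp
      moreover have "k > M" using n k by simp
      ultimately show ?thesis using M by simp
    qed simp
  qed
  thus ?thesis unfolding fls_subst_sq_def by simp
qed

lemma sq_inj: "fls_subst_sq f = fls_subst_sq g \<Longrightarrow> f = g"
proof (rule fls_eqI)
  fix n assume "fls_subst_sq f = fls_subst_sq g"
  hence "fls_nth (fls_subst_sq f) (2 * n) = fls_nth (fls_subst_sq g) (2 * n)" by simp
  thus "fls_nth f n = fls_nth g n" by (simp add: sq_nth)
qed

lemma sq_add: "fls_subst_sq (f + g) = fls_subst_sq f + fls_subst_sq g"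
  by (rule fls_eqI) (simp add: sq_nth)
lemma sq_uminus: "fls_subst_sq (- (f::'a::comm_ring_1 fls)) = - fls_subst_sq f"
  by (rule fls_eqI) (simp add: sq_nth)
lemma sq_diff: "fls_subst_sq (f - (g::'a::comm_ring_1 fls)) = fls_subst_sq f - fls_subst_sq g"
  by (rule fls_eqI) (simp add: sq_nth)
lemma sq_const: "fls_subst_sq (fls_const (c::'a::comm_ring_1)) = fls_const c"
  by (rule fls_eqI) (auto simp: sq_nth)
lemma sq_numeral: "fls_subst_sq (numeral k :: 'a::comm_ring_1 fls) = numeral k"
  using sq_const[of "numeral k :: 'a"] by simp
lemma sq_X_inv: "fls_subst_sq (fls_X_inv :: 'a::comm_ring_1 fls) = fls_X_inv ^ 2"
  by (rule fls_eqI) (auto simp: sq_nth)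

lemma sq_mult: "fls_subst_sq (f * g) = fls_subst_sq f * fls_subst_sq (g::'a::comm_ring_1 fls)"
proof (rule fls_eqI)
  fix n
  define a where "a = fls_subdegree f"
  define b where "b = fls_subdegree g"
  have fa: "\<And>i. i < a \<Longrightarrow> fls_nth f i = 0" and gb: "\<And>i. i < b \<Longrightarrow> fls_nth g i = 0"
    unfolding a_def b_def by auto
  have sfa: "\<And>i. i < 2 * a \<Longrightarrow> fls_nth (fls_subst_sq f) i = 0"
    using fa by (auto simp: sq_nth)
  have sgb: "\<And>i. i < 2 * b \<Longrightarrow> fls_nth (fls_subst_sq g) i = 0"
    using gb by (auto simp: sq_nth)
  define F where "F i = fls_nth (fls_subst_sq f) i * fls_nth (fls_subst_sq g) (n - i)" for i
  have R: "fls_nth (fls_subst_sq f * fls_subst_sq g) n = (\<Sum>i=2*a..n-2*b. F i)"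
    unfolding F_def by (rule times_nth_bound[OF sfa sgb])
  show "fls_nth (fls_subst_sq (f * g)) n = fls_nth (fls_subst_sq f * fls_subst_sq g) n"
  proof (cases "even n")
    case False
    have "(\<Sum>i=2*a..n-2*b. F i) = 0"
    proof (rule sum.neutral, rule ballI)
      fix i
      have "odd i \<or> odd (n - i)" using False by auto
      thus "F i = 0" unfolding F_def by (auto simp: sq_nth)
    qed
    thus ?thesis using R False by (simp add: sq_nth)
  next
    case True
    then obtain m where m: "n = 2 * m" by blast
    have "(\<Sum>i=2*a..n-2*b. F i) = (\<Sum>i\<in>(\<lambda>j. 2 * j) ` {a..m-b}. F i)"
    proof (rule sum.mono_neutral_right)
      show "finite {2 * a..n - 2 * b}" by simp
      show "(\<lambda>j. 2 * j) ` {a..m - b} \<subseteq> {2 * a..n - 2 * b}" using m by auto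
      show "\<forall>i\<in>{2 * a..n - 2 * b} - (\<lambda>j. 2 * j) ` {a..m - b}. F i = 0"
      proof
        fix i assume i: "i \<in> {2 * a..n - 2 * b} - (\<lambda>j. 2 * j) ` {a..m - b}"
        have "odd i"
        proof
          assume "even i"
          then obtain j where j: "i = 2 * j" by blast
          hence "j \<in> {a..m-b}" using i m by auto
          thus False using i j by auto
        qed
        thus "F i = 0" unfolding F_def by (simp add: sq_nth)
      qed
    qed
    also have "\<dots> = (\<Sum>j=a..m-b. F (2 * j))"
      by (subst sum.reindex) (auto simp: inj_on_def)
    also have "\<dots> = (\<Sum>j=a..m-b. fls_nth f j * fls_nth g (m - j))"
    proof (rule sum.cong)
      fix j
      have "n - 2 * j = 2 * (m - j)" using m by simp
      thus "F (2 * j) = fls_nth f j * fls_nth g (m - j)" unfolding F_def by (simp add: sq_nth)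
    qed simp
    also have "\<dots> = fls_nth (f * g) m" by (rule times_nth_bound[OF fa gb, symmetric])
    finally show ?thesis using R m by (simp add: sq_nth)
  qed
qed

lemma sq_power2: "fls_subst_sq ((f::'a::comm_ring_1 fls)^2) = (fls_subst_sq f)^2"
  by (simp add: power2_eq_square sq_mult)

lemma (in deriv) sq_dmap: "fls_subst_sq (fls_dmap \<delta> f) = fls_dmap \<delta> (fls_subst_sq f)"
  by (rule fls_eqI) (simp add: sq_nth)

lemma sum_in:
  assumes "0 \<in> S" "\<And>a b. a \<in> S \<Longrightarrow> b \<in> S \<Longrightarrow> a + b \<in> S" "\<And>i. i \<in> A \<Longrightarrow> f i \<in> S"
  shows "sum f A \<in> S"
  using assms(3)
proof (induction A rule: infinite_finite_induct)
  case (infinite A) thus ?case using assms(1) by simp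
next
  case empty thus ?case using assms(1) by simp
next
  case (insert x F) thus ?case using assms(2) by simp
qed

definition ps :: "'a::zero fls \<Rightarrow> bool" where
  "ps f \<longleftrightarrow> (\<forall>n<0. fls_nth f n = 0)"

lemma ps_mult: "ps f \<Longrightarrow> ps g \<Longrightarrow> ps (f * (g::'a::comm_ring_1 fls))"
  unfolding ps_def using ps_times_ps by blast

lemma ps_prod_nth: "ps f \<Longrightarrow> ps g \<Longrightarrow> fls_nth (f * (g::'a::comm_ring_1 fls)) n = (\<Sum>i=0..n. fls_nth f i * fls_nth g (n - i))"
  unfolding ps_def by (rule ps_times_nth) auto

lemma prod_dep:
  fixes F G F' G' :: "'a::comm_ring_1 fls"
  assumes "ps F" "ps G" "ps F'" "ps G'"
    and "\<And>j. j < n \<Longrightarrow> fls_nth F j = fls_nth F' j" "\<And>j. j < n \<Longrightarrow> fls_nth G j = fls_nth G' j"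
    and "m < n"
  shows "fls_nth (F * G) m = fls_nth (F' * G') m"
  unfolding ps_prod_nth[OF assms(1,2)] ps_prod_nth[OF assms(3,4)]
  using assms(5,6,7) by (intro sum.cong) auto

lemma prod_in:
  fixes F G :: "'a::comm_ring_1 fls"
  assumes "ps F" "ps G" "0 \<in> S" "\<And>a b. a \<in> S \<Longrightarrow> b \<in> S \<Longrightarrow> a + b \<in> S"
    "\<And>a b. a \<in> S \<Longrightarrow> b \<in> S \<Longrightarrow> a * b \<in> S"
    "\<And>j. j < n \<Longrightarrow> fls_nth F j \<in> S" "\<And>j. j < n \<Longrightarrow> fls_nth G j \<in> S" "m < n"
  shows "fls_nth (F * G) m \<in> S"
  unfolding ps_prod_nth[OF assms(1,2)]
  using assms(6,7,8) by (intro sum_in[OF assms(3,4)] assms(5)) auto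

locale bctx = deriv \<delta> for \<delta> :: "'r::comm_ring_1 \<Rightarrow> 'r" +
  fixes u k2 :: 'r
  assumes k2b: "2 * k2 = 1"
begin

definition Eqn :: "'r fls \<Rightarrow> bool" where
  "Eqn b \<longleftrightarrow> b * fls_dmap \<delta> (fls_dmap \<delta> b) - fls_const k2 * (fls_dmap \<delta> b)^2
        - 2 * (fls_X_inv - 2 * fls_const u) * b^2 = - 2 * fls_X_inv"

definition Rr :: "'r fls \<Rightarrow> int \<Rightarrow> 'r" where
  "Rr b n = fls_nth (b * fls_dmap \<delta> (fls_dmap \<delta> b)) (n - 1)
     - k2 * fls_nth (fls_dmap \<delta> b * fls_dmap \<delta> b) (n - 1)
     + 4 * u * fls_nth (b * b) (n - 1) - 2 * (\<Sum>i=1..n-1. fls_nth b i * fls_nth b (n - i))"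

lemma ps_dm: "ps b \<Longrightarrow> ps (fls_dmap \<delta> b)" by (simp add: ps_def)

lemma recur:
  assumes "ps b" "fls_nth b 0 = 1" "Eqn b" "n > 0"
  shows "4 * fls_nth b n = Rr b n"
proof -
  define X where "X = fls_nth (b * fls_dmap \<delta> (fls_dmap \<delta> b)) (n - 1)"
  define Y where "Y = fls_nth (fls_dmap \<delta> b * fls_dmap \<delta> b) (n - 1)"
  define Z where "Z = fls_nth (b * b) (n - 1)"
  define S where "S = (\<Sum>i=1..n-1. fls_nth b i * fls_nth b (n - i))"
  have e: "b * fls_dmap \<delta> (fls_dmap \<delta> b) - fls_const k2 * (fls_dmap \<delta> b * fls_dmap \<delta> b)
        - (2 * (fls_X_inv * (b * b)) - 4 * (fls_const u * (b * b))) = - 2 * fls_X_inv"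
    using assms(3) unfolding Eqn_def by (simp add: algebra_simps power2_eq_square)
  have "fls_nth (b * fls_dmap \<delta> (fls_dmap \<delta> b) - fls_const k2 * (fls_dmap \<delta> b * fls_dmap \<delta> b)
        - (2 * (fls_X_inv * (b * b)) - 4 * (fls_const u * (b * b)))) (n - 1) = fls_nth (- 2 * fls_X_inv) (n - 1)"
    unfolding e ..
  hence e2: "X - k2 * Y - (2 * fls_nth (b * b) n - 4 * (u * Z)) = 0"
    using assms(4) unfolding X_def Y_def Z_def by (simp add: X_inv_mult_nth)
  have bb: "fls_nth (b * b) n = (\<Sum>i=0..n. fls_nth b i * fls_nth b (n - i))"
    using ps_prod_nth[OF assms(1) assms(1)] .
  have "{0..n} = insert 0 (insert n {1..n-1})" using assms(4) by auto
  hence "(\<Sum>i=0..n. fls_nth b i * fls_nth b (n - i)) = fls_nth b 0 * fls_nth b n + (fls_nth b n * fls_nth b 0 + S)"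
    unfolding S_def using assms(4) by simp
  hence bb2: "fls_nth (b * b) n = 2 * fls_nth b n + S" using bb assms(2) by simp
  have "4 * fls_nth b n = X - k2 * Y + 4 * u * Z - 2 * S - (X - k2 * Y - (2 * (2 * fls_nth b n + S) - 4 * (u * Z)))"
    by (simp add: algebra_simps)
  also have "\<dots> = X - k2 * Y + 4 * u * Z - 2 * S" using e2 bb2 by simp
  finally show ?thesis unfolding Rr_def X_def Y_def Z_def S_def .
qed

lemma Rr_dep:
  assumes "ps b" "ps c" "\<And>j. j < n \<Longrightarrow> fls_nth b j = fls_nth c j"
  shows "Rr b n = Rr c n"
proof -
  have d1: "\<And>j. j < n \<Longrightarrow> fls_nth (fls_dmap \<delta> b) j = fls_nth (fls_dmap \<delta> c) j" using assms(3) by simp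
  have d2: "\<And>j. j < n \<Longrightarrow> fls_nth (fls_dmap \<delta> (fls_dmap \<delta> b)) j = fls_nth (fls_dmap \<delta> (fls_dmap \<delta> c)) j"
    using assms(3) by simp
  have pb: "ps (fls_dmap \<delta> b)" "ps (fls_dmap \<delta> (fls_dmap \<delta> b))" using assms(1) by (simp_all add: ps_dm)
  have pc: "ps (fls_dmap \<delta> c)" "ps (fls_dmap \<delta> (fls_dmap \<delta> c))" using assms(2) by (simp_all add: ps_dm)
  have "fls_nth (b * fls_dmap \<delta> (fls_dmap \<delta> b)) (n - 1) = fls_nth (c * fls_dmap \<delta> (fls_dmap \<delta> c)) (n - 1)"
    by (rule prod_dep[OF assms(1) pb(2) assms(2) pc(2) assms(3) d2]) auto
  moreover have "fls_nth (fls_dmap \<delta> b * fls_dmap \<delta> b) (n - 1) = fls_nth (fls_dmap \<delta> c * fls_dmap \<delta> c) (n - 1)"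
    by (rule prod_dep[OF pb(1) pb(1) pc(1) pc(1) d1 d1]) auto
  moreover have "fls_nth (b * b) (n - 1) = fls_nth (c * c) (n - 1)"
    by (rule prod_dep[OF assms(1) assms(1) assms(2) assms(2) assms(3) assms(3)]) auto
  moreover have "(\<Sum>i=1..n-1. fls_nth b i * fls_nth b (n - i)) = (\<Sum>i=1..n-1. fls_nth c i * fls_nth c (n - i))"
    using assms(3) by (intro sum.cong) auto
  ultimately show ?thesis unfolding Rr_def by simp
qed

lemma k2sq': "k2 * k2 * 4 = 1"
proof -
  have "k2 * k2 * 4 = (2 * k2) * (2 * k2)" by (simp add: algebra_simps)
  thus ?thesis using k2b by simp
qed

lemma cancel4: "4 * x = 4 * y \<Longrightarrow> x = (y::'r)"
proof -
  assume h: "4 * x = 4 * y"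
  have "x = (k2 * k2 * 4) * x" using k2sq' by simp
  also have "\<dots> = k2 * k2 * (4 * x)" by (simp only: mult.assoc)
  also have "\<dots> = k2 * k2 * (4 * y)" using h by simp
  also have "\<dots> = (k2 * k2 * 4) * y" by (simp only: mult.assoc)
  finally show ?thesis using k2sq' by simp
qed

lemma uniq:
  assumes "ps b" "fls_nth b 0 = 1" "Eqn b" "ps c" "fls_nth c 0 = 1" "Eqn c"
  shows "b = c"
proof -
  have "\<forall>j. j < int k \<longrightarrow> fls_nth b j = fls_nth c j" for k
  proof (induction k)
    case 0 thus ?case using assms(1,4) by (simp add: ps_def)
  next
    case (Suc k)
    have "fls_nth b (int k) = fls_nth c (int k)"
    proof (cases "k = 0")
      case True thus ?thesis using assms(2,5) by simp
    next
      case False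
      hence "int k > 0" by simp
      hence "4 * fls_nth b (int k) = 4 * fls_nth c (int k)"
        using recur[OF assms(1-3)] recur[OF assms(4-6)] Rr_dep[OF assms(1,4)] Suc.IH by simp
      thus ?thesis by (rule cancel4)
    qed
    show ?case
    proof (intro allI impI)
      fix j assume "j < int (Suc k)"
      hence "j < int k \<or> j = int k" by auto
      thus "fls_nth b j = fls_nth c j" using Suc.IH \<open>fls_nth b (int k) = fls_nth c (int k)\<close> by auto
    qed
  qed
  hence "\<And>j. fls_nth b j = fls_nth c j"
    by (metis lt_ex zless_iff_Suc_zadd less_add_one zle_int not_less int_ops(1) of_nat_0_le_iff
        nat_int nat_0_le zless_nat_eq_int_zless int_nat_eq)
  thus ?thesis by (rule fls_eqI)
qed

lemma coeffs_in:
  assumes "ps b" "fls_nth b 0 = 1" "Eqn b"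
    and S0: "0 \<in> S" and S1: "1 \<in> S" and Sadd: "\<And>a b. a \<in> S \<Longrightarrow> b \<in> S \<Longrightarrow> a + b \<in> S"
    and Smult: "\<And>a b. a \<in> S \<Longrightarrow> b \<in> S \<Longrightarrow> a * b \<in> S"
    and Sneg: "\<And>a. a \<in> S \<Longrightarrow> - a \<in> S" and Sd: "\<And>a. a \<in> S \<Longrightarrow> \<delta> a \<in> S"
    and Su: "u \<in> S" and Sk: "k2 \<in> S"
  shows "fls_nth b n \<in> S"
proof -
  have Snat: "of_nat m \<in> S" for m by (induction m) (auto intro: S0 S1 Sadd)
  have Snum: "numeral m \<in> S" for m using Snat[of "numeral m"] by simp
  have Sdiff: "a \<in> S \<Longrightarrow> c \<in> S \<Longrightarrow> a - c \<in> S" for a c using Sadd[OF _ Sneg, of a c] by simp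
  have pd: "ps (fls_dmap \<delta> b)" "ps (fls_dmap \<delta> (fls_dmap \<delta> b))" using assms(1) by (simp_all add: ps_dm)
  have "\<forall>j. j < int k \<longrightarrow> fls_nth b j \<in> S" for k
  proof (induction k)
    case 0 thus ?case using assms(1) S0 by (simp add: ps_def)
  next
    case (Suc k)
    have IH: "\<And>j. j < int k \<Longrightarrow> fls_nth b j \<in> S" using Suc.IH by simp
    have "fls_nth b (int k) \<in> S"
    proof (cases "k = 0")
      case True thus ?thesis using assms(2) S1 by simp
    next
      case False
      hence kp: "int k > 0" by simp
      have d1: "\<And>j. j < int k \<Longrightarrow> fls_nth (fls_dmap \<delta> b) j \<in> S" using IH Sd by simp
      have d2: "\<And>j. j < int k \<Longrightarrow> fls_nth (fls_dmap \<delta> (fls_dmap \<delta> b)) j \<in> S" using IH Sd by simp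
      have km: "int k - 1 < int k" by simp
      have p1: "fls_nth (b * fls_dmap \<delta> (fls_dmap \<delta> b)) (int k - 1) \<in> S"
        using prod_in[of b "fls_dmap \<delta> (fls_dmap \<delta> b)" S "int k" "int k - 1"] assms(1) pd(2) S0 Sadd Smult IH d2 km
        by blast
      have p2: "fls_nth (fls_dmap \<delta> b * fls_dmap \<delta> b) (int k - 1) \<in> S"
        using prod_in[of "fls_dmap \<delta> b" "fls_dmap \<delta> b" S "int k" "int k - 1"] pd(1) S0 Sadd Smult d1 km
        by blast
      have p3: "fls_nth (b * b) (int k - 1) \<in> S"
        using prod_in[of b b S "int k" "int k - 1"] assms(1) S0 Sadd Smult IH km
        by blast
      have p4: "(\<Sum>i=1..int k-1. fls_nth b i * fls_nth b (int k - i)) \<in> S"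
        by (rule sum_in[OF S0 Sadd]) (auto intro!: Smult IH)
      have "Rr b (int k) \<in> S"
        unfolding Rr_def using p1 p2 p3 p4
        by (intro Sdiff Sadd Smult Snum Sk Su)
      hence "(k2 * k2) * Rr b (int k) \<in> S" by (intro Smult Sk)
      moreover have "(k2 * k2) * Rr b (int k) = fls_nth b (int k)"
        using recur[OF assms(1-3) kp] k2sq' by (metis mult.assoc mult_1)
      ultimately show ?thesis by simp
    qed
    show ?case
    proof (intro allI impI)
      fix j assume "j < int (Suc k)"
      hence "j < int k \<or> j = int k" by auto
      thus "fls_nth b j \<in> S" using Suc.IH \<open>fls_nth b (int k) \<in> S\<close> by auto
    qed
  qed
  thus ?thesis
    by (metis assms(1) S0 ps_def not_less zless_nat_eq_int_zless lessI nat_less_iff int_nat_eq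
        less_add_one of_nat_Suc)
qed

end

lemma mat2_nth: "mat2 a b c e $ i $ j = (if i = 1 then (if j = 1 then a else b) else (if j = 1 then c else e))"
  by (simp add: mat2_def)

lemma mat2_cong: "a = a' \<Longrightarrow> b = b' \<Longrightarrow> c = c' \<Longrightarrow> d = d' \<Longrightarrow> mat2 a b c d = mat2 a' b' c' d'"
  by simp

lemma mat2_mult: "mat2 a b c d ** mat2 a' b' c' d' =
   mat2 (a * a' + b * c') (a * b' + b * d') (c * a' + d * c') (c * b' + d * d')"
  by (simp add: mat2_def matrix_matrix_mult_def vec_eq_iff sum_2 forall_2)

lemma mat2_neg: "- mat2 a b c d = mat2 (- a) (- b) (- c) (- (d::'a::ring_1))"
  by (simp add: mat2_def vec_eq_iff forall_2)

lemma mat2_one: "mat 1 = mat2 (1::'a::ring_1) 0 0 1"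
  by (simp add: mat2_def mat_def vec_eq_iff forall_2)

lemma chi_mat2: "(\<chi> i j. g (mat2 a b c d $ i $ j)) = mat2 (g a) (g b) (g c) (g d)"
  by (simp add: mat2_def vec_eq_iff forall_2)

lemma det_mat2: "det (mat2 a b c (d::'a::comm_ring_1)) = a * d - b * c"
  by (simp add: det_2 mat2_def)

lemma inv_unique:
  fixes A M :: "'a::comm_ring_1^'n^'n"
  assumes "A ** M = mat 1" "M ** A = mat 1"
  shows "invertible A" "matrix_inv A = M"
proof -
  show "invertible A" unfolding invertible_def using assms by blast
  have "\<exists>A'. A ** A' = mat 1 \<and> A' ** A = mat 1" using assms by blast
  hence h: "A ** matrix_inv A = mat 1 \<and> matrix_inv A ** A = mat 1"
    unfolding matrix_inv_def by (rule someI_ex)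
  have "matrix_inv A = matrix_inv A ** (A ** M)" using assms by simp
  also have "\<dots> = (matrix_inv A ** A) ** M" by (rule matrix_mul_assoc)
  also have "\<dots> = M" using h by simp
  finally show "matrix_inv A = M" .
qed

lemma ring_inv:
  fixes w ws P Q z X K :: "'a::comm_ring_1"
  assumes zX: "z * X = 1" and K2: "2 * K = 1" and W: "ws * P - w * Q = 2 * z"
  shows "mat2 w ws (- P) (- Q) ** mat2 (- (K*X*Q)) (- (K*X*ws)) (K*X*P) (K*X*w) = mat 1"
    and "mat2 (- (K*X*Q)) (- (K*X*ws)) (K*X*P) (K*X*w) ** mat2 w ws (- P) (- Q) = mat 1"
proof -
  have one: "K * X * (ws * P - w * Q) = 1"
  proof -
    have "K * X * (ws * P - w * Q) = (2 * K) * (z * X)" unfolding W by (simp add: algebra_simps)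
    thus ?thesis using zX K2 by simp
  qed
  have a: "w * - (K * X * Q) + ws * (K * X * P) = 1" using one by (simp add: algebra_simps)
  have b: "w * - (K * X * ws) + ws * (K * X * w) = 0" by (simp add: algebra_simps)
  have c: "- P * - (K * X * Q) + - Q * (K * X * P) = 0" by (simp add: algebra_simps)
  have d: "- P * - (K * X * ws) + - Q * (K * X * w) = 1" using one by (simp add: algebra_simps)
  show "mat2 w ws (- P) (- Q) ** mat2 (- (K*X*Q)) (- (K*X*ws)) (K*X*P) (K*X*w) = mat 1"
    unfolding mat2_mult mat2_one a b c d ..
  have a: "- (K * X * Q) * w + - (K * X * ws) * - P = 1" using one by (simp add: algebra_simps)
  have b: "- (K * X * Q) * ws + - (K * X * ws) * - Q = 0" by (simp add: algebra_simps)
  have c: "K * X * P * w + K * X * w * - P = 0" by (simp add: algebra_simps)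
  have d: "K * X * P * ws + K * X * w * - Q = 1" using one by (simp add: algebra_simps)
  show "mat2 (- (K*X*Q)) (- (K*X*ws)) (K*X*P) (K*X*w) ** mat2 w ws (- P) (- Q) = mat 1"
    unfolding mat2_mult mat2_one a b c d ..
qed

lemma ring_R:
  fixes w ws P Q z X K cu :: "'a::comm_ring_1"
  assumes zX: "z * X = 1" and K2: "2 * K = 1"
  shows "mat2 (K * (P * ws + w * Q)) (w * ws)
            ((z^2 - 2 * cu) * (w * ws) - K * (2 * z^2 * (w * ws) - 4 * cu * (w * ws) + 2 * P * Q))
            (- (K * (P * ws + w * Q)))
       = - (mat2 w ws (- P) (- Q) ** mat2 z 0 0 (- z) ** mat2 (- (K*X*Q)) (- (K*X*ws)) (K*X*P) (K*X*w))"
proof -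
  have a: "K * (P * ws + w * Q) = - ((w * z + ws * 0) * - (K * X * Q) + (w * 0 + ws * - z) * (K * X * P))"
  proof -
    have "- ((w * z + ws * 0) * - (K * X * Q) + (w * 0 + ws * - z) * (K * X * P)) = (z * X) * (K * (P * ws + w * Q))"
      by (simp add: algebra_simps)
    thus ?thesis using zX by simp
  qed
  have b: "w * ws = - ((w * z + ws * 0) * - (K * X * ws) + (w * 0 + ws * - z) * (K * X * w))"
  proof -
    have "- ((w * z + ws * 0) * - (K * X * ws) + (w * 0 + ws * - z) * (K * X * w)) = (z * X) * (2 * K) * (w * ws)"
      by (simp add: algebra_simps)
    thus ?thesis using zX K2 by simp
  qed
  have c: "(z^2 - 2 * cu) * (w * ws) - K * (2 * z^2 * (w * ws) - 4 * cu * (w * ws) + 2 * P * Q)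
     = - ((- P * z + - Q * 0) * - (K * X * Q) + (- P * 0 + - Q * - z) * (K * X * P))"
  proof -
    have "(z^2 - 2 * cu) * (w * ws) - K * (2 * z^2 * (w * ws) - 4 * cu * (w * ws) + 2 * P * Q)
        = (1 - 2 * K) * ((z^2 - 2 * cu) * (w * ws)) - (2 * K) * (P * Q)"
      by (simp add: algebra_simps)
    also have "\<dots> = - (P * Q)" using K2 by simp
    also have "\<dots> = - ((z * X) * (2 * K) * (P * Q))" using zX K2 by simp
    also have "\<dots> = - ((- P * z + - Q * 0) * - (K * X * Q) + (- P * 0 + - Q * - z) * (K * X * P))"
      by (simp add: algebra_simps)
    finally show ?thesis .
  qed
  have d: "- (K * (P * ws + w * Q)) = - ((- P * z + - Q * 0) * - (K * X * ws) + (- P * 0 + - Q * - z) * (K * X * w))"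
  proof -
    have "- ((- P * z + - Q * 0) * - (K * X * ws) + (- P * 0 + - Q * - z) * (K * X * w)) = - ((z * X) * (K * (P * ws + w * Q)))"
      by (simp add: algebra_simps)
    thus ?thesis using zX by simp
  qed
  show ?thesis unfolding mat2_mult mat2_neg using a b c d by (rule mat2_cong)
qed

lemma zX1: "(fls_X_inv :: 'a::comm_ring_1 fls) * fls_X = 1"
  by (rule fls_eqI) (simp add: fls_X_inv_times_conv_shift)

lemma kdvL_coeff: "pd_coeff (kdvL u) i = (if i = 2 then 1 else if i = 0 then 2 * u else (0::'r::comm_ring_1))"
  unfolding pd_coeff_def kdvL_def pd_of_def
  by (subst nth_Abs_fls) (auto simp: MOST_nat intro!: exI[of _ 2])

lemma kdvL_nth: "fls_nth (kdvL u) n = (if n = -2 then 1 else if n = 0 then 2 * u else (0::'r::comm_ring_1))"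
  using kdvL_coeff[of u "- n"] unfolding pd_coeff_def by auto

lemma kdvL_top: assumes "(1::'r::comm_ring_1) \<noteq> 0" shows "pd_top (kdvL (u::'r)) = 2"
proof -
  have n2: "fls_nth (kdvL u) (-2) \<noteq> 0" using assms by (simp add: kdvL_nth)
  hence nz: "kdvL u \<noteq> 0" by auto
  have "fls_subdegree (kdvL u) \<le> -2" using n2 by (rule fls_subdegree_leI)
  moreover have "-2 \<le> fls_subdegree (kdvL u)"
    by (rule fls_subdegree_geI[OF nz]) (simp add: kdvL_nth)
  ultimately show ?thesis unfolding pd_top_def by simp
qed

lemma conjL: assumes "(1::'r::comm_ring_1) \<noteq> 0"
  shows "conj_apply d c (kdvL (u::'r)) w = shift_op d c (shift_op d c w) + fls_const (2 * u) * w"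
proof -
  have s: "{0..nat (pd_top (kdvL u))} = {0, 1, 2::nat}" using kdvL_top[OF assms] by auto
  show ?thesis unfolding conj_apply_def s by (simp add: kdvL_coeff numeral_2_eq_2)
qed

theorem lemma3p4:
  fixes \<iota> :: "complex \<Rightarrow> 'v::comm_ring_1"
    and d :: "'v \<Rightarrow> 'v"
    and V :: "'v set"
    and \<Phi> :: "'r::comm_ring_1 \<Rightarrow> ((nat \<Rightarrow>\<^sub>0 nat) \<Rightarrow> 'v)"
    and \<kappa> :: "complex \<Rightarrow> 'r"
    and D :: "nat \<Rightarrow> 'r \<Rightarrow> 'r"
    and u :: 'r
    and w ws :: "'r fls"
  assumes iota_add: "\<And>a b. \<iota> (a + b) = \<iota> a + \<iota> b"
    and iota_mult: "\<And>a b. \<iota> (a * b) = \<iota> a * \<iota> b"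
    and iota_one: "\<iota> 1 = 1"
    and d_add: "\<And>a b. d (a + b) = d a + d b"
    and d_mult: "\<And>a b. d (a * b) = a * d b + d a * b"
    and d_const: "\<And>c. d (\<iota> c) = 0"
    and V_const: "range \<iota> \<subseteq> V"
    and V_add: "\<And>a b. a \<in> V \<Longrightarrow> b \<in> V \<Longrightarrow> a + b \<in> V"
    and V_mult: "\<And>a b. a \<in> V \<Longrightarrow> b \<in> V \<Longrightarrow> a * b \<in> V"
    and V_d: "\<And>a. a \<in> V \<Longrightarrow> d a \<in> V"
    and V_tilde: "V \<subseteq> range d"
    and Phi_bij: "bij \<Phi>"
    and Phi_add: "\<And>a b. \<Phi> (a + b) = (\<lambda>\<alpha>. \<Phi> a \<alpha> + \<Phi> b \<alpha>)"
    and Phi_mult: "\<And>a b. \<Phi> (a * b) = ps_mult (\<Phi> a) (\<Phi> b)"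
    and Phi_one: "\<Phi> 1 = ps_const 1"
    and Phi_kappa: "\<And>c. \<Phi> (\<kappa> c) = ps_const (\<iota> c)"
    and Phi_Dx: "\<And>a. \<Phi> (D 0 a) = ps_dx d (\<Phi> a)"
    and Phi_Dt: "\<And>k a. \<Phi> (D (Suc k) a) = ps_dt k (\<Phi> a)"
    and u_in: "\<forall>\<alpha>. \<Phi> u \<alpha> \<in> V"
    and kdv: "kdv_solution D \<kappa> u"
    and pair: "is_wave_pair D \<kappa> u w ws"
  shows "det (wave_matrix (D 0) w ws) = 2 * fls_X_inv
    \<and> fls_subst_sq (kdv_b (D 0) \<kappa> {a. \<forall>\<alpha>. \<Phi> a \<alpha> \<in> V} u) = w * ws
    \<and> invertible (wave_matrix (D 0) w ws)
    \<and> (\<chi> i j. fls_subst_sq ((kdv_R (D 0) \<kappa> {a. \<forall>\<alpha>. \<Phi> a \<alpha> \<in> V} u) $ i $ j))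
        = - (wave_matrix (D 0) w ws ** mat2 fls_X_inv 0 0 (- fls_X_inv)
               ** matrix_inv (wave_matrix (D 0) w ws))"

proof (cases "(1::'r) = 0")
  case True
  have all0: "x = 0" for x :: 'r
  proof -
    have "x = x * 1" by simp
    also have "\<dots> = 0" unfolding True by simp
    finally show ?thesis .
  qed
  have allr: "\<And>x y::'r. x = y" using all0 by metis
  have allf: "\<And>f g :: 'r fls. f = g" by (rule fls_eqI, rule allr)
  have allm: "\<And>A B :: 'r fls^2^2. A = B" unfolding vec_eq_iff by (intro allI allf)
  have inv: "invertible (wave_matrix (D 0) w ws)"
    unfolding invertible_def by (rule exI[of _ "mat 1"], intro conjI allm)
  show ?thesis by (intro conjI inv allf allm)
next
  case False
  hence nontriv: "(1::'r) \<noteq> 0" by simp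
  have injP: "inj \<Phi>" using Phi_bij bij_is_inj by auto
  have P0: "\<Phi> 0 = (\<lambda>\<alpha>. 0)"
  proof
    fix \<alpha> have "\<Phi> 0 \<alpha> = \<Phi> 0 \<alpha> + \<Phi> 0 \<alpha>" using fun_cong[OF Phi_add[of 0 0], of \<alpha>] by simp
    thus "\<Phi> 0 \<alpha> = 0" by simp
  qed
  have Pneg: "\<Phi> (- a) \<alpha> = - \<Phi> a \<alpha>" for a \<alpha>
  proof -
    have "\<Phi> a \<alpha> + \<Phi> (- a) \<alpha> = 0" using fun_cong[OF Phi_add[of a "- a"], of \<alpha>] P0 by simp
    thus ?thesis by (simp add: eq_neg_iff_add_eq_0 add.commute)
  qed
  interpret dv: deriv d by unfold_locales (rule d_add, rule d_mult)
  have Dadd: "D 0 (a + b) = D 0 a + D 0 b" for a b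
  proof (rule injD[OF injP])
    show "\<Phi> (D 0 (a + b)) = \<Phi> (D 0 a + D 0 b)"
      unfolding Phi_Dx Phi_add
    proof
      fix \<alpha> show "ps_dx d (\<lambda>\<alpha>. \<Phi> a \<alpha> + \<Phi> b \<alpha>) \<alpha> = ps_dx d (\<Phi> a) \<alpha> + ps_dx d (\<Phi> b) \<alpha>"
        unfolding ps_dx_def by (rule d_add)
    qed
  qed
  have Dmult: "D 0 (a * b) = a * D 0 b + D 0 a * b" for a b
  proof (rule injD[OF injP])
    show "\<Phi> (D 0 (a * b)) = \<Phi> (a * D 0 b + D 0 a * b)"
      unfolding Phi_Dx Phi_add Phi_mult
    proof
      fix \<alpha>
      show "ps_dx d (ps_mult (\<Phi> a) (\<Phi> b)) \<alpha> =
        ps_mult (\<Phi> a) (ps_dx d (\<Phi> b)) \<alpha> + ps_mult (ps_dx d (\<Phi> a)) (\<Phi> b) \<alpha>"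
        unfolding ps_dx_def ps_mult_def dv.dsum d_mult by (rule sum.distrib)
    qed
  qed
  have kadd: "\<kappa> (a + b) = \<kappa> a + \<kappa> b" for a b
  proof (rule injD[OF injP])
    show "\<Phi> (\<kappa> (a + b)) = \<Phi> (\<kappa> a + \<kappa> b)"
      unfolding Phi_kappa Phi_add
    proof
      fix \<alpha> show "ps_const (\<iota> (a + b)) \<alpha> = ps_const (\<iota> a) \<alpha> + ps_const (\<iota> b) \<alpha>"
        unfolding ps_const_def iota_add by simp
    qed
  qed
  have k1: "\<kappa> 1 = 1"
    by (rule injD[OF injP]) (simp add: Phi_kappa Phi_one iota_one)
  define k2 where "k2 = \<kappa> (1/2)"
  have k2: "2 * k2 = 1"
  proof -
    have "2 * k2 = k2 + k2" by (rule mult_2)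
    also have "\<dots> = \<kappa> (1/2 + 1/2)" unfolding k2_def kadd ..
    also have "(1/2 + 1/2 :: complex) = 1" by simp
    finally show ?thesis using k1 by simp
  qed
  define S where "S = {a. \<forall>\<alpha>. \<Phi> a \<alpha> \<in> V}"
  have iota0: "\<iota> 0 = 0" using iota_add[of 0 0] by simp
  have V0: "0 \<in> V" using V_const iota0 by (metis range_eqI subsetD)
  have V1: "1 \<in> V" using V_const iota_one by (metis range_eqI subsetD)
  have iotam1: "\<iota> (-1) = -1"
  proof -
    have "\<iota> (-1) + \<iota> 1 = 0" using iota_add[of "-1" 1] iota0 by simp
    thus ?thesis using iota_one by (simp add: eq_neg_iff_add_eq_0)
  qed
  have Vneg: "v \<in> V \<Longrightarrow> - v \<in> V" for v
  proof -
    assume "v \<in> V"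
    moreover have "\<iota> (-1) \<in> V" using V_const by auto
    ultimately have "\<iota> (-1) * v \<in> V" using V_mult by blast
    thus ?thesis using iotam1 by simp
  qed
  have S0: "0 \<in> S" unfolding S_def using P0 V0 by simp
  have S1: "1 \<in> S" unfolding S_def using V0 V1 by (simp add: Phi_one ps_const_def)
  have Sadd: "a \<in> S \<Longrightarrow> b \<in> S \<Longrightarrow> a + b \<in> S" for a b
    unfolding S_def by (simp add: Phi_add V_add)
  have Sneg: "a \<in> S \<Longrightarrow> - a \<in> S" for a
    unfolding S_def by (simp add: Pneg Vneg)
  have Smult: "a \<in> S \<Longrightarrow> b \<in> S \<Longrightarrow> a * b \<in> S" for a b
  proof -
    assume "a \<in> S" "b \<in> S"
    hence ha: "\<forall>\<alpha>. \<Phi> a \<alpha> \<in> V" and hb: "\<forall>\<alpha>. \<Phi> b \<alpha> \<in> V" unfolding S_def by auto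
    have "\<Phi> (a * b) \<alpha> \<in> V" for \<alpha>
      unfolding Phi_mult ps_mult_def using ha hb by (intro sum_in[of V] V0 V_add V_mult) auto
    thus ?thesis unfolding S_def by simp
  qed
  have Sd: "a \<in> S \<Longrightarrow> D 0 a \<in> S" for a
    unfolding S_def by (simp add: Phi_Dx ps_dx_def V_d)
  have Su: "u \<in> S" unfolding S_def using u_in by simp
  have Sk: "k2 \<in> S" unfolding S_def k2_def using V_const V0 by (auto simp: Phi_kappa ps_const_def)
  have wf: "wave_eqs D \<kappa> u fls_X_inv w" and wsf: "wave_eqs D \<kappa> u (- fls_X_inv) ws"
    and pr: "\<And>i. fls_nth ((shift_op (D 0) fls_X_inv ^^ i) w * ws) 1 = 0"
    using pair unfolding is_wave_pair_def is_wave_function_def by blast+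
  interpret wc: wavectx "D 0" u k2 w ws
  proof (unfold_locales)
    show "\<And>a b. D 0 (a + b) = D 0 a + D 0 b" by (rule Dadd)
    show "\<And>a b. D 0 (a * b) = a * D 0 b + D 0 a * b" by (rule Dmult)
    show "2 * k2 = 1" by (rule k2)
    show "\<And>n. n < 0 \<Longrightarrow> fls_nth w n = 0" "fls_nth w 0 = 1" using wf unfolding wave_eqs_def by blast+
    show "\<And>n. n < 0 \<Longrightarrow> fls_nth ws n = 0" "fls_nth ws 0 = 1" using wsf unfolding wave_eqs_def by blast+
    show "shift_op (D 0) fls_X_inv (shift_op (D 0) fls_X_inv w) + fls_const (2 * u) * w = fls_X_inv\<^sup>2 * w"
      using wf unfolding wave_eqs_def conjL[OF nontriv] by blast
    show "shift_op (D 0) (- fls_X_inv) (shift_op (D 0) (- fls_X_inv) ws) + fls_const (2 * u) * ws = fls_X_inv\<^sup>2 * ws"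
      using wsf unfolding wave_eqs_def conjL[OF nontriv] by blast
    show "\<And>i. fls_nth ((shift_op (D 0) fls_X_inv ^^ i) w * ws) 1 = 0" by (rule pr)
  qed
  interpret bc: bctx "D 0" u k2 by unfold_locales (rule k2)
  have Psi: "wave_matrix (D 0) w ws = mat2 w ws (- wc.P) (- wc.Q)"
    unfolding wave_matrix_def wc.P_def wc.Q_def ..
  have Wz: "ws * wc.P - w * wc.Q = 2 * fls_X_inv" using wc.W_eq unfolding wc.W_def .
  have c1: "det (wave_matrix (D 0) w ws) = 2 * fls_X_inv"
    unfolding Psi det_mat2 using Wz by (simp add: algebra_simps)
  define b0 where "b0 = Abs_fls (\<lambda>n. fls_nth wc.f (2 * n))"
  have b0_nth: "fls_nth b0 n = fls_nth wc.f (2 * n)" for n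
    unfolding b0_def by (subst nth_Abs_fls) (auto simp: MOST_nat intro!: exI[of _ 0] wc.f_ps)
  have sqb0: "fls_subst_sq b0 = wc.f"
  proof (rule fls_eqI)
    fix n show "fls_nth (fls_subst_sq b0) n = fls_nth wc.f n"
      by (cases "even n") (auto simp: sq_nth b0_nth wc.f_odd)
  qed
  have psb0: "ps b0" unfolding ps_def b0_nth using wc.f_ps by simp
  have b00: "fls_nth b0 0 = 1" using wc.f0 by (simp add: b0_nth)
  have Eb0: "bc.Eqn b0"
  proof -
    have "fls_subst_sq (b0 * fls_dmap (D 0) (fls_dmap (D 0) b0) - fls_const k2 * (fls_dmap (D 0) b0)^2
        - 2 * (fls_X_inv - 2 * fls_const u) * b0^2)
      = wc.f * fls_dmap (D 0) (fls_dmap (D 0) wc.f) - wc.K * (fls_dmap (D 0) wc.f)^2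
         - 2 * (fls_X_inv^2 - 2 * fls_const u) * wc.f^2"
      by (simp only: sq_diff sq_mult sq_power2 wc.sq_dmap sq_const sq_numeral sq_X_inv sqb0 wc.K_def)
    also have "\<dots> = fls_subst_sq (- 2 * fls_X_inv)"
      unfolding wc.riccati by (simp only: sq_mult sq_uminus sq_numeral sq_X_inv)
    finally show ?thesis unfolding bc.Eqn_def by (rule sq_inj)
  qed
  have Sb0: "fls_nth b0 n \<in> S" for n
    by (rule bc.coeffs_in[OF psb0 b00 Eb0 S0 S1 Sadd Smult Sneg Sd Su Sk])
  have kb: "kdv_b (D 0) \<kappa> S u = b0"
    unfolding kdv_b_def
  proof (rule the_equality)
    show "(\<forall>n. fls_nth b0 n \<in> S) \<and> (\<forall>n<0. fls_nth b0 n = 0) \<and> fls_nth b0 0 = 1 \<and>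
      b0 * fls_dmap (D 0) (fls_dmap (D 0) b0) - fls_const (\<kappa> (1 / 2)) * (fls_dmap (D 0) b0)\<^sup>2 -
      2 * (fls_X_inv - 2 * fls_const u) * b0\<^sup>2 = - 2 * fls_X_inv"
      using Sb0 psb0 b00 Eb0 unfolding ps_def bc.Eqn_def unfolding k2_def by blast
  next
    fix b assume h: "(\<forall>n. fls_nth b n \<in> S) \<and> (\<forall>n<0. fls_nth b n = 0) \<and> fls_nth b 0 = 1 \<and>
      b * fls_dmap (D 0) (fls_dmap (D 0) b) - fls_const (\<kappa> (1 / 2)) * (fls_dmap (D 0) b)\<^sup>2 -
      2 * (fls_X_inv - 2 * fls_const u) * b\<^sup>2 = - 2 * fls_X_inv"
    hence "ps b" "fls_nth b 0 = 1" "bc.Eqn b" unfolding ps_def bc.Eqn_def unfolding k2_def by blast+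
    thus "b = b0" using bc.uniq psb0 b00 Eb0 by blast
  qed
  have c2: "fls_subst_sq (kdv_b (D 0) \<kappa> S u) = w * ws"
    unfolding kb sqb0 wc.f_def ..
  define M where "M = mat2 (- (wc.K * fls_X * wc.Q)) (- (wc.K * fls_X * ws)) (wc.K * fls_X * wc.P) (wc.K * fls_X * w)"
  have inv1: "wave_matrix (D 0) w ws ** M = mat 1" and inv2: "M ** wave_matrix (D 0) w ws = mat 1"
    unfolding Psi M_def using ring_inv[OF zX1 wc.K2 Wz] by auto
  have c3: "invertible (wave_matrix (D 0) w ws)" and mi: "matrix_inv (wave_matrix (D 0) w ws) = M"
    using inv_unique[OF inv1 inv2] by auto
  have kR: "kdv_R (D 0) \<kappa> S u = mat2 (wc.K * fls_dmap (D 0) b0) b0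
        ((fls_X_inv - 2 * fls_const u) * b0 - wc.K * fls_dmap (D 0) (fls_dmap (D 0) b0)) (- wc.K * fls_dmap (D 0) b0)"
    unfolding kdv_R_def kb Let_def wc.K_def unfolding k2_def ..
  have c4: "(\<chi> i j. fls_subst_sq (kdv_R (D 0) \<kappa> S u $ i $ j))
        = - (wave_matrix (D 0) w ws ** mat2 fls_X_inv 0 0 (- fls_X_inv) ** matrix_inv (wave_matrix (D 0) w ws))"
  proof -
    have "(\<chi> i j. fls_subst_sq (kdv_R (D 0) \<kappa> S u $ i $ j)) =
       mat2 (wc.K * fls_dmap (D 0) wc.f) wc.f
        ((fls_X_inv^2 - 2 * fls_const u) * wc.f - wc.K * fls_dmap (D 0) (fls_dmap (D 0) wc.f)) (- wc.K * fls_dmap (D 0) wc.f)"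
      unfolding kR chi_mat2 wc.K_def
      by (simp only: sq_diff sq_mult sq_uminus wc.sq_dmap sq_const sq_numeral sq_X_inv sqb0)
    also have "\<dots> = mat2 (wc.K * (wc.P * ws + w * wc.Q)) (w * ws)
            ((fls_X_inv^2 - 2 * fls_const u) * (w * ws) - wc.K * (2 * fls_X_inv^2 * (w * ws) - 4 * fls_const u * (w * ws) + 2 * wc.P * wc.Q))
            (- (wc.K * (wc.P * ws + w * wc.Q)))"
      unfolding wc.ddf unfolding wc.dm_f unfolding wc.A_def wc.B_def wc.f_def by simp
    also have "\<dots> = - (mat2 w ws (- wc.P) (- wc.Q) ** mat2 fls_X_inv 0 0 (- fls_X_inv) ** M)"
      unfolding M_def by (rule ring_R[OF zX1 wc.K2])
    finally show ?thesis unfolding mi unfolding Psi .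
  qed
  show ?thesis unfolding S_def[symmetric] by (intro conjI c1 c2 c3 c4)
qed

end
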